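(* There exist constants $c_1,c_2>0$ (depending only on $d$) such that for all $z,z'\in\mathbb{R}^{2d+1}$: if $c_1\min\{\|z'\|,\|(z')^{-1}\|\}\le\|z\|$, then $c_2\|z\|\le\min\{\|z\circ z'\|,\|z'\circ z\|\}$.
   Context: Let $d\ge1$. Points of $\mathbb{R}^{2d+1}$ are $z=(x,y,t)$ with $x,y\in\mathbb{R}^d$, $t\in\mathbb{R}$. Group law: $(x',y',t')\circ(x,y,t)=(x+x'+ty',y+y',t+t')$; inverse $(x,y,t)^{-1}=(-x+ty,-y,-t)$. Quasi-norm $\|z\|=|x|^{1/3}+|y|+|t|^{1/2}$. *)

theory Defs
  imports "HOL-Analysis.Analysis"
begin

text \<open>Points of R^(2d+1) as triples (x, y, t) with x, y in real^'n (d = CARD('n)), t real.\<close>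

definition hmul :: "((real^'n) \<times> (real^'n) \<times> real) \<Rightarrow> ((real^'n) \<times> (real^'n) \<times> real) \<Rightarrow> ((real^'n) \<times> (real^'n) \<times> real)"
  where "hmul z' z = (case z' of (x', y', t') \<Rightarrow> case z of (x, y, t) \<Rightarrow>
           (x + x' + t *\<^sub>R y', y + y', t + t'))"

definition hinv :: "((real^'n) \<times> (real^'n) \<times> real) \<Rightarrow> ((real^'n) \<times> (real^'n) \<times> real)"
  where "hinv z = (case z of (x, y, t) \<Rightarrow> (- x + t *\<^sub>R y, - y, - t))"

definition qnorm :: "((real^'n) \<times> (real^'n) \<times> real) \<Rightarrow> real"
  where "qnorm z = (case z of (x, y, t) \<Rightarrow> root 3 (norm x) + norm y + sqrt \<bar>t\<bar>)"

end

theory Submission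
  imports Defs
begin

lemma root3_le_of_cube:
  fixes a b :: real assumes "0 \<le> b" "a \<le> b^3"
  shows "root 3 a \<le> b"
proof -
  have "root 3 a \<le> root 3 (b^3)" using assms by (simp add: real_root_le_iff)
  also have "\<dots> = b" using assms by (simp add: real_root_power_cancel)
  finally show ?thesis .
qed

lemma root3_cube: "0 \<le> a \<Longrightarrow> (root 3 a)^3 = a"
  by (simp add: real_root_pow_pos2)

lemma root3_sub:
  fixes a b c :: real assumes "0 \<le> a" "0 \<le> b" "0 \<le> c"
  shows "root 3 (a + b + c) \<le> root 3 a + root 3 b + root 3 c"
proof (rule root3_le_of_cube)
  let ?u = "root 3 a" and ?v = "root 3 b" and ?w = "root 3 c"
  have u: "?u \<ge> 0" "?v \<ge> 0" "?w \<ge> 0" using assms by auto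
  have "a + b + c = ?u^3 + ?v^3 + ?w^3" using assms by (simp add: root3_cube)
  also have "\<dots> \<le> (?u + ?v + ?w)^3" using u
    by (simp add: power3_eq_cube algebra_simps)
  finally show "a + b + c \<le> (?u + ?v + ?w)^3" .
  show "0 \<le> ?u + ?v + ?w" using u by simp
qed

lemma root3_prod:
  fixes t y :: real assumes "0 \<le> y"
  shows "root 3 (\<bar>t\<bar> * y) \<le> sqrt \<bar>t\<bar> + y"
proof (rule root3_le_of_cube)
  let ?p = "sqrt \<bar>t\<bar>"
  have p: "?p \<ge> 0" by simp
  have "\<bar>t\<bar> * y = ?p^2 * y" by simp
  also have "\<dots> \<le> (?p + y)^3" using p assms
    by (simp add: power3_eq_cube power2_eq_square algebra_simps)
  finally show "\<bar>t\<bar> * y \<le> (?p + y)^3" .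
  show "0 \<le> ?p + y" using assms by simp
qed

lemma qnorm_nonneg: "qnorm z \<ge> 0"
  by (cases z) (auto simp: qnorm_def)

lemma qnorm_mul: "qnorm (hmul a b) \<le> 2 * (qnorm a + qnorm b)"
proof -
  obtain x' y' t' where a: "a = (x', y', t')" by (cases a) auto
  obtain x y t where b: "b = (x, y, t)" by (cases b) auto
  have "norm (x + x' + t *\<^sub>R y') \<le> norm x + norm x' + \<bar>t\<bar> * norm y'"
    by (smt (verit) norm_scaleR norm_triangle_ineq)
  hence "root 3 (norm (x + x' + t *\<^sub>R y')) \<le> root 3 (norm x + norm x' + \<bar>t\<bar> * norm y')"
    by (simp add: real_root_le_iff)
  also have "\<dots> \<le> root 3 (norm x) + root 3 (norm x') + root 3 (\<bar>t\<bar> * norm y')"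
    by (rule root3_sub) auto
  also have "\<dots> \<le> root 3 (norm x) + root 3 (norm x') + (sqrt \<bar>t\<bar> + norm y')"
    using root3_prod[of "norm y'" t] by simp
  finally have 1: "root 3 (norm (x + x' + t *\<^sub>R y')) \<le> root 3 (norm x) + root 3 (norm x') + (sqrt \<bar>t\<bar> + norm y')" .
  have 2: "norm (y + y') \<le> norm y + norm y'" by (rule norm_triangle_ineq)
  have "sqrt \<bar>t + t'\<bar> \<le> sqrt (\<bar>t\<bar> + \<bar>t'\<bar>)" by simp
  also have "\<dots> \<le> sqrt \<bar>t\<bar> + sqrt \<bar>t'\<bar>" by (rule sqrt_add_le_add_sqrt) auto
  finally have 3: "sqrt \<bar>t + t'\<bar> \<le> sqrt \<bar>t\<bar> + sqrt \<bar>t'\<bar>" .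
  have p: "root 3 (norm x) \<ge> 0" "root 3 (norm x') \<ge> 0" "sqrt \<bar>t\<bar> \<ge> 0" "sqrt \<bar>t'\<bar> \<ge> 0" "norm y \<ge> 0" "norm y' \<ge> 0" by auto
  have e: "qnorm (hmul a b) = root 3 (norm (x + x' + t *\<^sub>R y')) + norm (y + y') + sqrt \<bar>t + t'\<bar>"
    "qnorm a = root 3 (norm x') + norm y' + sqrt \<bar>t'\<bar>" "qnorm b = root 3 (norm x) + norm y + sqrt \<bar>t\<bar>"
    by (simp_all add: a b hmul_def qnorm_def)
  show ?thesis unfolding e using 1 2 3 p by (smt (verit))
qed

lemma qnorm_inv: "qnorm (hinv z) \<le> 2 * qnorm z"
proof -
  obtain x y t where z: "z = (x, y, t)" by (cases z) auto
  have "norm (- x + t *\<^sub>R y) \<le> norm x + 0 + \<bar>t\<bar> * norm y"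
    by (smt (verit) norm_scaleR norm_triangle_ineq norm_minus_cancel)
  hence "root 3 (norm (- x + t *\<^sub>R y)) \<le> root 3 (norm x + 0 + \<bar>t\<bar> * norm y)"
    by (simp add: real_root_le_iff)
  also have "\<dots> \<le> root 3 (norm x) + root 3 0 + root 3 (\<bar>t\<bar> * norm y)"
    by (rule root3_sub) auto
  also have "\<dots> \<le> root 3 (norm x) + (sqrt \<bar>t\<bar> + norm y)"
    using root3_prod[of "norm y" t] by simp
  finally have 1: "root 3 (norm (- x + t *\<^sub>R y)) \<le> root 3 (norm x) + (sqrt \<bar>t\<bar> + norm y)" .
  have p: "root 3 (norm x) \<ge> 0" "sqrt \<bar>t\<bar> \<ge> 0" "norm y \<ge> 0" by auto
  have e: "qnorm (hinv z) = root 3 (norm (- x + t *\<^sub>R y)) + norm (- y) + sqrt \<bar>- t\<bar>"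
    "qnorm z = root 3 (norm x) + norm y + sqrt \<bar>t\<bar>"
    by (simp_all add: z hinv_def qnorm_def)
  show ?thesis unfolding e using 1 p by (smt (verit) norm_minus_cancel abs_minus_cancel)
qed

lemma assoc1: "hmul (hmul z z') (hinv z') = z"
  by (cases z; cases z') (simp add: hmul_def hinv_def algebra_simps)

lemma assoc2: "hmul (hinv z') (hmul z' z) = z"
  by (cases z; cases z') (simp add: hmul_def hinv_def algebra_simps)

theorem mainTheorem6:
  shows "\<exists>c1 c2 :: real. c1 > 0 \<and> c2 > 0 \<and>
    (\<forall>(z :: (real^'n) \<times> (real^'n) \<times> real) z'.
        c1 * min (qnorm z') (qnorm (hinv z')) \<le> qnorm z \<longrightarrow>
        c2 * qnorm z \<le> min (qnorm (hmul z z')) (qnorm (hmul z' z)))"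
proof (intro exI conjI allI impI)
  fix z z' :: "(real^'n) \<times> (real^'n) \<times> real"
  assume h: "8 * min (qnorm z') (qnorm (hinv z')) \<le> qnorm z"
  have m: "qnorm (hinv z') \<le> 2 * min (qnorm z') (qnorm (hinv z'))"
    using qnorm_inv[of z'] qnorm_nonneg[of "hinv z'"] by linarith
  have a: "qnorm z \<le> 2 * (qnorm (hmul z z') + qnorm (hinv z'))"
    using qnorm_mul[of "hmul z z'" "hinv z'"] by (simp add: assoc1)
  have b: "qnorm z \<le> 2 * (qnorm (hinv z') + qnorm (hmul z' z))"
    using qnorm_mul[of "hinv z'" "hmul z' z"] by (simp add: assoc2)
  show "1/4 * qnorm z \<le> min (qnorm (hmul z z')) (qnorm (hmul z' z))"
    using h m a b by (simp add: min_def)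
qed auto

end
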